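(* Let $\mathbf{A}$ be an $n\times k$ matrix with i.i.d. $\mathrm{Bernoulli}(p)$ entries. Let $\mathcal{S}$ be a set of size $m>k$ drawn uniformly at random from $[n]$, let $\mathbf{A}_{\mathcal{S}}$ be the $m\times k$ submatrix formed by the rows of $\mathbf{A}$ indexed by $\mathcal{S}$, and let $\alpha=\max(p,1-p)$. Then $$\mathbb{P}\left[\mathrm{rank}_{\mathbb{R}}(\mathbf{A}_{\mathcal{S}})=k\right]\ge 1-\min\left(1,k\cdot\alpha^{m-k+1}\right).$$ *)

theory Defs
  imports "HOL-Probability.Product_PMF" "Jordan_Normal_Form.DL_Rank"
begin

definition bernoulli_matrix_pmf :: "nat \<Rightarrow> nat \<Rightarrow> real \<Rightarrow> (nat \<times> nat \<Rightarrow> bool) pmf" where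
  "bernoulli_matrix_pmf n k p = Pi_pmf ({0..<n} \<times> {0..<k}) False (\<lambda>_. bernoulli_pmf p)"

definition random_subset_pmf :: "nat \<Rightarrow> nat \<Rightarrow> nat set pmf" where
  "random_subset_pmf n m = pmf_of_set {S. S \<subseteq> {0..<n} \<and> card S = m}"

definition row_submatrix :: "(nat \<times> nat \<Rightarrow> bool) \<Rightarrow> nat set \<Rightarrow> nat \<Rightarrow> real mat" where
  "row_submatrix A S k = mat (card S) k (\<lambda>(i, j). of_bool (A (sorted_list_of_set S ! i, j)))"

definition rank_real :: "real mat \<Rightarrow> nat" where
  "rank_real M = vec_space.rank (dim_row M) M"

end

theory Submission
  imports Defs
begin


lemma prob_bind_bernoulli:
  assumes "0 \<le> p" "p \<le> 1"
  shows "measure_pmf.prob (bind_pmf (bernoulli_pmf p) f) A =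
         p * measure_pmf.prob (f True) A + (1 - p) * measure_pmf.prob (f False) A"
proof -
  have "emeasure (measure_pmf (bind_pmf (bernoulli_pmf p) f)) A =
        (\<integral>\<^sup>+x. emeasure (measure_pmf (f x)) A \<partial>bernoulli_pmf p)" by simp
  also have "\<dots> = emeasure (measure_pmf (f True)) A * p + emeasure (measure_pmf (f False)) A * (1 - p)"
    using assms by simp
  also have "\<dots> = ennreal (p * measure_pmf.prob (f True) A + (1 - p) * measure_pmf.prob (f False) A)"
    using assms by (simp add: measure_pmf.emeasure_eq_measure ennreal_mult' ennreal_plus mult.commute)
  finally have "ennreal (measure_pmf.prob (bind_pmf (bernoulli_pmf p) f) A) =
     ennreal (p * measure_pmf.prob (f True) A + (1 - p) * measure_pmf.prob (f False) A)"
    by (simp add: measure_pmf.emeasure_eq_measure)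
  then show ?thesis using assms by (subst (asm) ennreal_inj) auto
qed

lemma prob_bind_le:
  assumes "\<And>x. x \<in> set_pmf M \<Longrightarrow> measure_pmf.prob (f x) A \<le> c"
  shows "measure_pmf.prob (bind_pmf M f) A \<le> c"
proof -
  obtain x where x: "x \<in> set_pmf M" using set_pmf_not_empty[of M] by blast
  have c0: "0 \<le> c" using assms[OF x] measure_nonneg order_trans by blast
  have "emeasure (measure_pmf (bind_pmf M f)) A = (\<integral>\<^sup>+x. emeasure (measure_pmf (f x)) A \<partial>M)" by simp
  also have "\<dots> \<le> (\<integral>\<^sup>+x. ennreal c \<partial>M)"
    by (intro nn_integral_mono_AE AE_pmfI) (auto simp add: measure_pmf.emeasure_eq_measure assms intro!: ennreal_leI)
  also have "\<dots> = ennreal c" by simp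
  finally show ?thesis using c0 by (simp add: measure_pmf.emeasure_eq_measure)
qed

lemma prob_bind_ge:
  assumes "\<And>x. x \<in> set_pmf M \<Longrightarrow> measure_pmf.prob (f x) A \<ge> c"
  shows "measure_pmf.prob (bind_pmf M f) A \<ge> c"
proof (cases "c \<le> 0")
  case True then show ?thesis using measure_nonneg order_trans by blast
next
  case False
  have "ennreal c = (\<integral>\<^sup>+x. ennreal c \<partial>M)" by simp
  also have "\<dots> \<le> (\<integral>\<^sup>+x. emeasure (measure_pmf (f x)) A \<partial>M)"
    by (intro nn_integral_mono_AE AE_pmfI) (auto simp add: measure_pmf.emeasure_eq_measure assms intro!: ennreal_leI)
  also have "\<dots> = emeasure (measure_pmf (bind_pmf M f)) A" by simp
  finally show ?thesis using False by (simp add: measure_pmf.emeasure_eq_measure)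
qed


lemma affine_step_alg:
  fixes c :: "'i \<Rightarrow> real"
  assumes "finite I" "i0 \<in> I" "u i0 s \<noteq> 0"
    and "K * u i0 s = (\<Sum>i\<in>I. c i * u i s)"
  shows "(\<Sum>i\<in>I. c i * u i r) = K * u i0 r +
          (\<Sum>i\<in>I - {i0}. c i * (u i r - u i s / u i0 s * u i0 r))"
proof -
  have K: "K = (c i0 * u i0 s + (\<Sum>i\<in>I - {i0}. c i * u i s)) / u i0 s"
    using assms by (simp add: sum.remove field_simps)
  have "(\<Sum>i\<in>I - {i0}. c i * (u i r - u i s / u i0 s * u i0 r)) =
        (\<Sum>i\<in>I - {i0}. c i * u i r) - (u i0 r / u i0 s) * (\<Sum>i\<in>I - {i0}. c i * u i s)"
    by (simp add: sum_subtractf sum_distrib_left right_diff_distrib mult_ac)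
  then show ?thesis using assms(1,2,3) unfolding K
    by (simp add: sum.remove field_simps)
qed

lemma affine_bound:
  fixes S :: "'r set" and p :: real and a :: "'r \<Rightarrow> real" and u :: "'i \<Rightarrow> 'r \<Rightarrow> real"
  assumes "finite S" "0 \<le> p" "p \<le> 1" "finite I"
  shows "measure_pmf.prob (Pi_pmf S d (\<lambda>_. bernoulli_pmf p))
           {X. \<exists>c. \<forall>r\<in>S. of_bool (X r) = a r + (\<Sum>i\<in>I. c i * u i r)}
         \<le> (max p (1 - p)) ^ (card S - card I)"
  using assms(1,4)
proof (induction S arbitrary: I a u rule: finite_induct)
  case empty
  then show ?case by simp
next
  case (insert s F)
  define \<alpha> where "\<alpha> = max p (1 - p)"
  have a0: "0 \<le> \<alpha>" "\<alpha> \<le> 1" "p \<le> \<alpha>" "1 - p \<le> \<alpha>" using assms unfolding \<alpha>_def by auto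
  let ?Q = "Pi_pmf F d (\<lambda>_. bernoulli_pmf p)"
  let ?E = "{X. \<exists>c. \<forall>r\<in>insert s F. of_bool (X r) = a r + (\<Sum>i\<in>I. c i * u i r)}"
  define sec where "sec y = (\<lambda>f. f(s := y)) -` ?E" for y
  have "Pi_pmf (insert s F) d (\<lambda>_. bernoulli_pmf p) =
        bind_pmf (bernoulli_pmf p) (\<lambda>y. map_pmf (\<lambda>f. f(s := y)) ?Q)"
    using insert by (simp add: Pi_pmf_insert' map_pmf_def)
  then have eq: "measure_pmf.prob (Pi_pmf (insert s F) d (\<lambda>_. bernoulli_pmf p)) ?E =
     p * measure_pmf.prob ?Q (sec True) + (1 - p) * measure_pmf.prob ?Q (sec False)"
    using assms by (simp add: prob_bind_bernoulli sec_def)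
  have cardi: "card (insert s F) = Suc (card F)" using insert by simp
  show ?case
  proof (cases "\<forall>i\<in>I. u i s = 0")
    case True
    define B where "B = \<alpha> ^ (card F - card I)"
    have B0: "0 \<le> B" using a0 by (simp add: B_def)
    have sec_sub: "sec y \<subseteq> (if of_bool y = a s then
        {X. \<exists>c. \<forall>r\<in>F. of_bool (X r) = a r + (\<Sum>i\<in>I. c i * u i r)} else {})" for y
      using True insert(2) by (auto simp: sec_def)
    have pb: "measure_pmf.prob ?Q (sec y) \<le> (if of_bool y = a s then B else 0)" for y
    proof (cases "of_bool y = a s")
      case True
      then show ?thesis using sec_sub[of y] insert.IH[OF insert.prems, of a u]
        by (auto simp: B_def \<alpha>_def intro: order_trans[OF measure_pmf.finite_measure_mono])
    next
      case False
      then show ?thesis using sec_sub[of y] by simp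
    qed
    have "p * measure_pmf.prob ?Q (sec True) + (1 - p) * measure_pmf.prob ?Q (sec False)
          \<le> p * (if of_bool True = a s then B else 0) + (1 - p) * (if of_bool False = a s then B else 0)"
      using pb[of True] pb[of False] assms(2,3) by (intro add_mono mult_left_mono) auto
    also have "\<dots> \<le> \<alpha> * B" using a0 B0 by (auto intro: mult_right_mono)
    also have "\<dots> \<le> \<alpha> ^ (card (insert s F) - card I)"
    proof (cases "card I \<le> card F")
      case True
      then have "card (insert s F) - card I = Suc (card F - card I)" using cardi by simp
      then show ?thesis by (simp add: B_def)
    next
      case False
      then have "B = 1" "card (insert s F) - card I = 0" using cardi by (simp_all add: B_def)
      then show ?thesis using a0 by simp
    qed
    finally show ?thesis using eq by (simp add: \<alpha>_def)
  next
    case False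
    then obtain i0 where i0: "i0 \<in> I" "u i0 s \<noteq> 0" by blast
    define u' where "u' i r = u i r - u i s / u i0 s * u i0 r" for i r
    define a' where "a' y r = a r + ((of_bool y - a s) / u i0 s) * u i0 r" for y r
    define B where "B = \<alpha> ^ (card F - card (I - {i0}))"
    have sec_sub: "sec y \<subseteq> {X. \<exists>c. \<forall>r\<in>F. of_bool (X r) = a' y r + (\<Sum>i\<in>I - {i0}. c i * u' i r)}" for y
    proof
      fix f assume "f \<in> sec y"
      then obtain c where c: "\<forall>r\<in>insert s F. of_bool ((f(s := y)) r) = a r + (\<Sum>i\<in>I. c i * u i r)"
        by (auto simp: sec_def)
      have cs: "of_bool y = a s + (\<Sum>i\<in>I. c i * u i s)" using c by auto
      have "\<forall>r\<in>F. of_bool (f r) = a' y r + (\<Sum>i\<in>I - {i0}. c i * u' i r)"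
      proof
        fix r assume r: "r \<in> F"
        then have "r \<noteq> s" using insert(2) by auto
        then have "of_bool (f r) = a r + (\<Sum>i\<in>I. c i * u i r)" using c r by auto
        also have "(\<Sum>i\<in>I. c i * u i r) = ((of_bool y - a s) / u i0 s) * u i0 r +
          (\<Sum>i\<in>I - {i0}. c i * (u i r - u i s / u i0 s * u i0 r))"
          by (rule affine_step_alg[where u=u and s=s, OF insert.prems i0]) (use cs i0 in simp)
        finally show "of_bool (f r) = a' y r + (\<Sum>i\<in>I - {i0}. c i * u' i r)"
          by (simp add: a'_def u'_def)
      qed
      then show "f \<in> {X. \<exists>c. \<forall>r\<in>F. of_bool (X r) = a' y r + (\<Sum>i\<in>I - {i0}. c i * u' i r)}" by blast
    qed
    have pb: "measure_pmf.prob ?Q (sec y) \<le> B" for y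
      using sec_sub[of y] insert.IH[of "I - {i0}" "a' y" u'] insert.prems
      by (auto simp: B_def \<alpha>_def intro: order_trans[OF measure_pmf.finite_measure_mono])
    have "p * measure_pmf.prob ?Q (sec True) + (1 - p) * measure_pmf.prob ?Q (sec False)
          \<le> p * B + (1 - p) * B"
      using pb[of True] pb[of False] assms(2,3) by (intro add_mono mult_left_mono) auto
    also have "\<dots> = \<alpha> ^ (card (insert s F) - card I)"
    proof -
      have "card I \<ge> 1" using i0 insert.prems by (metis One_nat_def Suc_leI card_gt_0_iff empty_iff)
      then have "card F - card (I - {i0}) = card (insert s F) - card I"
        using cardi i0 insert.prems by (simp add: card_Diff_singleton)
      then show ?thesis by (simp add: B_def algebra_simps)
    qed
    finally show ?thesis using eq by (simp add: \<alpha>_def)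
  qed
qed



lemma rank_deficient:
  fixes M :: "real mat"
  assumes M: "M \<in> carrier_mat m k" and r: "vec_space.rank m M \<noteq> k"
  obtains v where "v \<in> carrier_vec k" "v \<noteq> 0\<^sub>v k" "M *\<^sub>v v = 0\<^sub>v m"
proof -
  interpret vs: vec_space "TYPE(real)" m .
  show ?thesis
  proof (cases "distinct (cols M)")
    case True
    then have "\<not> vs.lin_indpt (set (cols M))" using vs.lin_indpt_full_rank[OF M] r by blast
    then show ?thesis using vs.lin_depE[OF M _ True] that by blast
  next
    case False
    then obtain a b where ab: "a < k" "b < k" "a \<noteq> b" "col M a = col M b"
      using M unfolding cols_def distinct_conv_nth by auto
    define v where "v = vec k (\<lambda>i. if i = a then 1 else if i = b then -1 else (0::real))"
    have v: "v \<in> carrier_vec k" by (simp add: v_def)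
    have "vec_index v a \<noteq> 0" using ab by (simp add: v_def)
    then have v0: "v \<noteq> 0\<^sub>v k" using ab by auto
    have "M *\<^sub>v v = 0\<^sub>v m"
    proof (rule eq_vecI)
      fix q assume q: "q < dim_vec (0\<^sub>v m :: real vec)"
      have "vec_index (M *\<^sub>v v) q = (\<Sum>i\<in>{0..<k}. M $$ (q, i) * vec_index v i)"
        using M q by (simp add: mult_mat_vec_def scalar_prod_def v_def)
      also have "\<dots> = M $$ (q, a) - M $$ (q, b)"
      proof -
        have "(\<Sum>i\<in>{0..<k}. M $$ (q, i) * vec_index v i) = (\<Sum>i\<in>{a, b}. M $$ (q, i) * vec_index v i)"
          by (rule sum.mono_neutral_right) (use ab in \<open>auto simp: v_def\<close>)
        then show ?thesis using ab by (simp add: v_def)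
      qed
      also have "\<dots> = 0"
      proof -
        have "M $$ (q, a) = vec_index (col M a) q" using M q ab(1) by simp
        also have "\<dots> = vec_index (col M b) q" using ab by simp
        also have "\<dots> = M $$ (q, b)" using M q ab(2) by simp
        finally show ?thesis by simp
      qed
      finally show "vec_index (M *\<^sub>v v) q = vec_index (0\<^sub>v m) q" using q by simp
    qed (use M in simp)
    then show ?thesis using that v v0 by blast
  qed
qed

lemma dep_col:
  fixes M :: "real mat"
  assumes v: "v \<in> carrier_vec k" "v \<noteq> 0\<^sub>v k" and M: "M \<in> carrier_mat m k" "M *\<^sub>v v = 0\<^sub>v m"
  shows "\<exists>j<k. \<exists>c. \<forall>q<m. M $$ (q, j) = (\<Sum>i\<in>{..<j}. c i * M $$ (q, i))"
proof -
  define J where "J = {i. i < k \<and> vec_index v i \<noteq> 0}"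
  have "J \<noteq> {}" using v unfolding J_def by (auto simp: vec_eq_iff)
  moreover have fJ: "finite J" unfolding J_def by simp
  ultimately have jJ: "Max J \<in> J" by simp
  define j where "j = Max J"
  have jk: "j < k" and vj: "vec_index v j \<noteq> 0" using jJ unfolding j_def J_def by auto
  have big: "vec_index v i = 0" if "j < i" "i < k" for i
  proof (rule ccontr)
    assume "vec_index v i \<noteq> 0"
    then have "i \<in> J" using that unfolding J_def by auto
    then have "i \<le> j" using Max_ge[OF fJ] unfolding j_def by auto
    then show False using that by simp
  qed
  have "\<forall>q<m. M $$ (q, j) = (\<Sum>i\<in>{..<j}. (- vec_index v i / vec_index v j) * M $$ (q, i))"
  proof (intro allI impI)
    fix q assume q: "q < m"
    have "0 = vec_index (M *\<^sub>v v) q" using M q by simp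
    also have "\<dots> = (\<Sum>i\<in>{0..<k}. M $$ (q, i) * vec_index v i)"
      using M(1) q v by (simp add: mult_mat_vec_def scalar_prod_def)
    also have "\<dots> = (\<Sum>i\<in>{..<Suc j}. M $$ (q, i) * vec_index v i)"
      by (rule sum.mono_neutral_right) (use jk big in auto)
    also have "\<dots> = M $$ (q, j) * vec_index v j + (\<Sum>i\<in>{..<j}. M $$ (q, i) * vec_index v i)" by simp
    finally have "M $$ (q, j) * vec_index v j = - (\<Sum>i\<in>{..<j}. M $$ (q, i) * vec_index v i)" by linarith
    then have "M $$ (q, j) = - (\<Sum>i\<in>{..<j}. M $$ (q, i) * vec_index v i) / vec_index v j"
      using vj by (simp add: field_simps)
    also have "\<dots> = (\<Sum>i\<in>{..<j}. (- vec_index v i / vec_index v j) * M $$ (q, i))"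
      by (simp add: sum_divide_distrib sum_negf[symmetric] field_simps)
    finally show "M $$ (q, j) = (\<Sum>i\<in>{..<j}. (- vec_index v i / vec_index v j) * M $$ (q, i))" .
  qed
  then show ?thesis
    using jk by (intro exI[where x=j] conjI exI[where x="\<lambda>i. - vec_index v i / vec_index v j"]) auto
qed


lemma bad_bound:
  fixes S :: "nat set" and p :: real
  assumes p: "0 \<le> p" "p \<le> 1" and S: "S \<subseteq> {0..<n}" "card S = m" and j: "j < k"
  shows "measure_pmf.prob (bernoulli_matrix_pmf n k p)
           {A. \<exists>c. \<forall>r\<in>S. (of_bool (A (r, j)) :: real) = (\<Sum>i\<in>{..<j}. c i * of_bool (A (r, i)))}
         \<le> (max p (1 - p)) ^ (m - j)"
proof -
  define D where "D = {0..<n} \<times> {0..<k}"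
  define C where "C = S \<times> {j}"
  define D' where "D' = D - C"
  let ?P = "\<lambda>_::nat\<times>nat. bernoulli_pmf p"
  let ?E = "{A. \<exists>c. \<forall>r\<in>S. (of_bool (A (r, j)) :: real) = (\<Sum>i\<in>{..<j}. c i * of_bool (A (r, i)))}"
  have fS: "finite S" using S finite_subset by blast
  have CD: "C \<subseteq> D" using S j unfolding C_def D_def by auto
  have fin: "finite D'" "finite C" using fS unfolding D'_def D_def C_def by auto
  have DU: "D = D' \<union> C" using CD unfolding D'_def by auto
  have "bernoulli_matrix_pmf n k p = Pi_pmf (D' \<union> C) False ?P"
    unfolding bernoulli_matrix_pmf_def D_def[symmetric] DU ..
  also have "\<dots> = map_pmf (\<lambda>(f,g) x. if x \<in> D' then f x else g x)
             (pair_pmf (Pi_pmf D' False ?P) (Pi_pmf C False ?P))"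
    by (rule Pi_pmf_union) (use fin in \<open>auto simp: D'_def\<close>)
  also have "\<dots> = bind_pmf (Pi_pmf D' False ?P)
      (\<lambda>f. map_pmf (\<lambda>g x. if x \<in> D' then f x else g x) (Pi_pmf C False ?P))"
    by (simp add: pair_pmf_def map_bind_pmf map_pmf_def bind_assoc_pmf bind_return_pmf)
  finally have eq: "bernoulli_matrix_pmf n k p = \<dots>" .
  have "measure_pmf.prob (bind_pmf (Pi_pmf D' False ?P)
      (\<lambda>f. map_pmf (\<lambda>g x. if x \<in> D' then f x else g x) (Pi_pmf C False ?P))) ?E
     \<le> (max p (1 - p)) ^ (card C - card {..<j})"
  proof (rule prob_bind_le)
    fix f
    let ?F = "{g. \<exists>c. \<forall>x\<in>C. (of_bool (g x) :: real) = 0 + (\<Sum>i\<in>{..<j}. c i * of_bool (f (fst x, i)))}"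
    have "(\<lambda>g x. if x \<in> D' then f x else g x) -` ?E \<subseteq> ?F"
    proof
      fix g assume "g \<in> (\<lambda>g x. if x \<in> D' then f x else g x) -` ?E"
      then obtain c where c: "\<forall>r\<in>S. (of_bool ((if (r, j) \<in> D' then f (r, j) else g (r, j))) :: real) =
          (\<Sum>i\<in>{..<j}. c i * of_bool (if (r, i) \<in> D' then f (r, i) else g (r, i)))" by auto
      have "\<forall>x\<in>C. (of_bool (g x) :: real) = 0 + (\<Sum>i\<in>{..<j}. c i * of_bool (f (fst x, i)))"
      proof
        fix x assume x: "x \<in> C"
        then obtain r where r: "x = (r, j)" "r \<in> S" unfolding C_def by auto
        have nD: "(r, j) \<notin> D'" using r x unfolding D'_def by auto
        have inD: "(r, i) \<in> D'" if "i < j" for i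
          using that r S j unfolding D'_def D_def C_def by auto
        have "(\<Sum>i\<in>{..<j}. c i * (of_bool (if (r, i) \<in> D' then f (r, i) else g (r, i)) :: real))
            = (\<Sum>i\<in>{..<j}. c i * of_bool (f (r, i)))"
          by (intro sum.cong refl) (simp add: inD)
        moreover have "(of_bool (if (r, j) \<in> D' then f (r, j) else g (r, j)) :: real) = of_bool (g (r, j))"
          using nD by simp
        ultimately have "(of_bool (g (r, j)) :: real) = (\<Sum>i\<in>{..<j}. c i * of_bool (f (r, i)))"
          using c[rule_format, OF r(2)] by simp
        then show "(of_bool (g x) :: real) = 0 + (\<Sum>i\<in>{..<j}. c i * of_bool (f (fst x, i)))"
          using r by simp
      qed
      then show "g \<in> ?F" by blast
    qed
    then have "measure_pmf.prob (Pi_pmf C False ?P) ((\<lambda>g x. if x \<in> D' then f x else g x) -` ?E)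
        \<le> measure_pmf.prob (Pi_pmf C False ?P) ?F"
      by (rule measure_pmf.finite_measure_mono) simp
    also have "\<dots> \<le> (max p (1 - p)) ^ (card C - card {..<j})"
      by (rule affine_bound) (use fin p in auto)
    finally show "measure_pmf.prob (map_pmf (\<lambda>g x. if x \<in> D' then f x else g x) (Pi_pmf C False ?P)) ?E
        \<le> (max p (1 - p)) ^ (card C - card {..<j})" by simp
  qed
  moreover have "card C = m" using S unfolding C_def by (simp add: card_cartesian_product)
  ultimately show ?thesis using eq by simp
qed


lemma rank_bad:
  fixes A :: "nat \<times> nat \<Rightarrow> bool"
  assumes fS: "finite S" and r: "rank_real (row_submatrix A S k) \<noteq> k"
  shows "\<exists>j<k. \<exists>c. \<forall>r\<in>S. (of_bool (A (r, j)) :: real) = (\<Sum>i\<in>{..<j}. c i * of_bool (A (r, i)))"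
proof -
  define M where "M = row_submatrix A S k"
  define m where "m = card S"
  have M: "M \<in> carrier_mat m k" unfolding M_def row_submatrix_def m_def by simp
  have "vec_space.rank m M \<noteq> k" using r M unfolding rank_real_def M_def by simp
  then obtain v where v: "v \<in> carrier_vec k" "v \<noteq> 0\<^sub>v k" "M *\<^sub>v v = 0\<^sub>v m"
    using rank_deficient[OF M] by blast
  obtain j c where j: "j < k" and jc: "\<forall>q<m. M $$ (q, j) = (\<Sum>i\<in>{..<j}. c i * M $$ (q, i))"
    using dep_col[OF v(1,2) M v(3)] by blast
  have "\<forall>r\<in>S. (of_bool (A (r, j)) :: real) = (\<Sum>i\<in>{..<j}. c i * of_bool (A (r, i)))"
  proof
    fix r assume rS: "r \<in> S"
    then obtain q where q: "q < m" "sorted_list_of_set S ! q = r"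
      using fS unfolding m_def by (metis in_set_conv_nth length_sorted_list_of_set set_sorted_list_of_set)
    have Me: "M $$ (q, i) = of_bool (A (r, i))" if "i < k" for i
      using q that unfolding M_def row_submatrix_def m_def by simp
    have "(\<Sum>i\<in>{..<j}. c i * M $$ (q, i)) = (\<Sum>i\<in>{..<j}. c i * of_bool (A (r, i)))"
      by (intro sum.cong refl) (use Me j in simp)
    then show "(of_bool (A (r, j)) :: real) = (\<Sum>i\<in>{..<j}. c i * of_bool (A (r, i)))"
      using jc q(1) Me[OF j] by simp
  qed
  then show ?thesis using j by blast
qed

lemma per_S_bound:
  fixes S :: "nat set" and p :: real
  assumes p: "0 \<le> p" "p \<le> 1" and S: "S \<subseteq> {0..<n}" "card S = m" and km: "k < m"
  shows "measure_pmf.prob (bernoulli_matrix_pmf n k p) {A. rank_real (row_submatrix A S k) = k}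
         \<ge> 1 - real k * (max p (1 - p)) ^ (m - k + 1)"
proof -
  define \<alpha> where "\<alpha> = max p (1 - p)"
  have a0: "0 \<le> \<alpha>" "\<alpha> \<le> 1" using p unfolding \<alpha>_def by auto
  let ?M = "bernoulli_matrix_pmf n k p"
  define bad where "bad (j::nat) = {A::nat \<times> nat \<Rightarrow> bool. \<exists>c. \<forall>r\<in>S. (of_bool (A (r, j)) :: real) = (\<Sum>i\<in>{..<j}. c i * of_bool (A (r, i)))}" for j
  have fS: "finite S" using S finite_subset by blast
  have sub: "{A. rank_real (row_submatrix A S k) \<noteq> k} \<subseteq> (\<Union>j\<in>{..<k}. bad j)"
    using rank_bad[OF fS] unfolding bad_def by blast
  have "measure_pmf.prob ?M {A. rank_real (row_submatrix A S k) \<noteq> k} \<le> measure_pmf.prob ?M (\<Union>j\<in>{..<k}. bad j)"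
    by (rule measure_pmf.finite_measure_mono[OF sub]) simp
  also have "\<dots> \<le> (\<Sum>j\<in>{..<k}. measure_pmf.prob ?M (bad j))"
    by (rule measure_pmf.finite_measure_subadditive_finite) auto
  also have "\<dots> \<le> (\<Sum>j\<in>{..<k}. \<alpha> ^ (m - k + 1))"
  proof (rule sum_mono)
    fix j assume j: "j \<in> {..<k}"
    have "measure_pmf.prob ?M (bad j) \<le> \<alpha> ^ (m - j)"
      unfolding bad_def \<alpha>_def by (rule bad_bound) (use p S j in auto)
    also have "\<dots> \<le> \<alpha> ^ (m - k + 1)"
      by (rule power_decreasing) (use a0 j km in auto)
    finally show "measure_pmf.prob ?M (bad j) \<le> \<alpha> ^ (m - k + 1)" .
  qed
  also have "\<dots> = real k * \<alpha> ^ (m - k + 1)" by simp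
  finally have le: "measure_pmf.prob ?M {A. rank_real (row_submatrix A S k) \<noteq> k} \<le> real k * \<alpha> ^ (m - k + 1)" .
  have "measure_pmf.prob ?M {A. rank_real (row_submatrix A S k) = k} =
        1 - measure_pmf.prob ?M {A. rank_real (row_submatrix A S k) \<noteq> k}"
  proof -
    have "{A. rank_real (row_submatrix A S k) = k} = space (measure_pmf ?M) - {A. rank_real (row_submatrix A S k) \<noteq> k}"
      by auto
    then show ?thesis using measure_pmf.prob_compl[of "{A. rank_real (row_submatrix A S k) \<noteq> k}"]
      by simp
  qed
  then show ?thesis using le unfolding \<alpha>_def by simp
qed

theorem lemma4:
  fixes n k m :: nat and p :: real
  assumes "0 \<le> p" "p \<le> 1" "k < m" "m \<le> n"
  shows "measure_pmf.prob (pair_pmf (bernoulli_matrix_pmf n k p) (random_subset_pmf n m))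
           {(A, S). rank_real (row_submatrix A S k) = k}
         \<ge> 1 - min 1 (real k * (max p (1 - p)) ^ (m - k + 1))"
proof -
  let ?M = "bernoulli_matrix_pmf n k p"
  let ?N = "random_subset_pmf n m"
  let ?E = "{(A, S). rank_real (row_submatrix A S k) = k}"
  let ?c = "1 - min 1 (real k * (max p (1 - p)) ^ (m - k + 1))"
  define U where "U = {S. S \<subseteq> {0..<n} \<and> card S = m}"
  have U: "finite U" "U \<noteq> {}"
  proof -
    show "finite U" unfolding U_def by (rule finite_subset[of _ "Pow {0..<n}"]) auto
    have "{0..<m} \<in> U" using assms unfolding U_def by auto
    then show "U \<noteq> {}" by blast
  qed
  have setN: "set_pmf ?N = U" unfolding random_subset_pmf_def U_def[symmetric] using U by simp
  have "pair_pmf ?M ?N = map_pmf (\<lambda>(x, y). (y, x)) (pair_pmf ?N ?M)" by (rule pair_commute_pmf)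
  also have "pair_pmf ?N ?M = bind_pmf ?N (\<lambda>S. map_pmf (\<lambda>A. (S, A)) ?M)"
    by (simp add: pair_pmf_def map_pmf_def)
  finally have eq: "measure_pmf.prob (pair_pmf ?M ?N) ?E =
      measure_pmf.prob (bind_pmf ?N (\<lambda>S. map_pmf (\<lambda>A. (S, A)) ?M)) ((\<lambda>(x, y). (y, x)) -` ?E)"
    by simp
  have "?c \<le> measure_pmf.prob (bind_pmf ?N (\<lambda>S. map_pmf (\<lambda>A. (S, A)) ?M)) ((\<lambda>(x, y). (y, x)) -` ?E)"
  proof (rule prob_bind_ge)
    fix S assume "S \<in> set_pmf ?N"
    then have S: "S \<subseteq> {0..<n}" "card S = m" using setN unfolding U_def by auto
    have "(\<lambda>A. (S, A)) -` ((\<lambda>(x, y). (y, x)) -` ?E) = {A. rank_real (row_submatrix A S k) = k}" by auto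
    then have "measure_pmf.prob (map_pmf (\<lambda>A. (S, A)) ?M) ((\<lambda>(x, y). (y, x)) -` ?E) =
        measure_pmf.prob ?M {A. rank_real (row_submatrix A S k) = k}" by simp
    moreover have "measure_pmf.prob ?M {A. rank_real (row_submatrix A S k) = k}
         \<ge> 1 - real k * (max p (1 - p)) ^ (m - k + 1)"
      by (rule per_S_bound) (use assms S in auto)
    moreover have "measure_pmf.prob ?M {A. rank_real (row_submatrix A S k) = k} \<ge> 0" by simp
    ultimately show "?c \<le> measure_pmf.prob (map_pmf (\<lambda>A. (S, A)) ?M) ((\<lambda>(x, y). (y, x)) -` ?E)"
      by linarith
  qed
  then show ?thesis using eq by simp
qed


end
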